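(* Suppose $\mathsf{N}=(\mathsf{M}-1)\mathsf{T}+1$ and consider the coding scheme described in the context. For each $k=0,1,\dots,\mathsf{M}-1$ there exists a function $f_k:\mathbb{R}^{\mathsf{N}}\to\mathbb{R}$ (which may depend on $n$) such that $$\lim_{n\to\infty} f_k\big(\tilde V^{(1)},\dots,\tilde V^{(\mathsf{N})}\big)=D_k$$ for every realization of the random variables, where $\tilde V^{(j)}$ depends on $n$ through $\zeta_1(n),\zeta_2(n)$.
   Context: Let $\mathsf{M},\mathsf{T}$ be positive integers, $\eta>0$, $\sigma^2>0$. Real inputs $A_1,\dots,A_{\mathsf{M}}$. For each $i\in[\mathsf{M}]$ let $R_i$ (with variance $\sigma^2$) and $S_{i,1},\dots,S_{i,\mathsf{T}-1}$ be zero-mean random variables, all of them mutually independent and independent of the inputs. Let $\zeta_1(n),\zeta_2(n)$ be strictly positive sequences with $\lim_{n\to\infty}\zeta_1(n)/\zeta_2(n)=\lim_{n\to\infty}\zeta_2(n)=0$ and, when $\mathsf{T}\ge2$, $\lim_{n\to\infty}\zeta_2(n)^{\mathsf{T}/(\mathsf{T}-1)}/\zeta_1(n)=0$. Encoding polynomials: if $\mathsf{T}\ge2$, $p_i(x)=(A_i+R_i)+\zeta_2(n)\sum_{t=1}^{\mathsf{T}-1}S_{i,t}x^t+\zeta_1(n)R_ix^{\mathsf{T}}$; if $\mathsf{T}=1$, $p_i(x)=(A_i+R_i)+\zeta_1(n)R_ix$. Fix distinct reals $x_1,\dots,x_{\mathsf{N}}$; node $j$ outputs $\tilde V^{(j)}=\prod_{i=1}^{\mathsf{M}}p_i(x_j)$.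 Let $\alpha=\eta/(\sigma^2+\eta)$ and $Z_i=\alpha(A_i+R_i)-A_i$ (equivalently $Z_i=-\frac{\sigma^2}{\sigma^2+\eta}A_i+\frac{\eta}{\sigma^2+\eta}R_i$). For $k=0,\dots,\mathsf{M}-1$, $D_k=\sum_{\mathcal{S}\subseteq[\mathsf{M}],|\mathcal{S}|=k}\big(\prod_{i\in\mathcal{S}}A_i\big)\big(\prod_{l\notin\mathcal{S}}(A_l+Z_l)\big)$. *)

theory Defs
  imports Complex_Main
begin

text \<open>Encoding polynomial p_i evaluated at x, for a fixed n (through z1 = zeta_1(n), z2 = zeta_2(n)).
  Indices i in {1..M}, t in {1..T-1}.\<close>
definition enc_poly ::
  "nat \<Rightarrow> real \<Rightarrow> real \<Rightarrow> real \<Rightarrow> real \<Rightarrow> (nat \<Rightarrow> real) \<Rightarrow> real \<Rightarrow> real" where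
  "enc_poly T z1 z2 a r s x =
     (if T \<ge> 2 then (a + r) + z2 * (\<Sum>t=1..T-1. s t * x ^ t) + z1 * r * x ^ T
      else (a + r) + z1 * r * x)"

definition node_output ::
  "nat \<Rightarrow> nat \<Rightarrow> real \<Rightarrow> real \<Rightarrow> (nat \<Rightarrow> real) \<Rightarrow> (nat \<Rightarrow> real) \<Rightarrow> (nat \<Rightarrow> nat \<Rightarrow> real)
     \<Rightarrow> real \<Rightarrow> real" where
  "node_output M T z1 z2 A R S xj = (\<Prod>i=1..M. enc_poly T z1 z2 (A i) (R i) (S i) xj)"

definition Zvar :: "real \<Rightarrow> real \<Rightarrow> real \<Rightarrow> real \<Rightarrow> real" where
  "Zvar \<eta> \<sigma>2 a r = (\<eta> / (\<sigma>2 + \<eta>)) * (a + r) - a"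

definition Dk :: "nat \<Rightarrow> real \<Rightarrow> real \<Rightarrow> (nat \<Rightarrow> real) \<Rightarrow> (nat \<Rightarrow> real) \<Rightarrow> nat \<Rightarrow> real" where
  "Dk M \<eta> \<sigma>2 A R k =
     (\<Sum>S\<in>{S. S \<subseteq> {1..M} \<and> card S = k}.
        (\<Prod>i\<in>S. A i) * (\<Prod>l\<in>{1..M} - S. A l + Zvar \<eta> \<sigma>2 (A l) (R l)))"

end

theory Submission
  imports Defs "HOL-Computational_Algebra.Polynomial"
begin


lemma lagrange_exists:
  fixes x :: "nat \<Rightarrow> real" and N :: nat
  assumes inj: "inj_on x {1..N}"
  shows "\<exists>lam :: nat \<Rightarrow> nat \<Rightarrow> real. \<forall>m d. d < N \<longrightarrow>
           (\<Sum>j=1..N. lam m j * x j ^ d) = (if m = d then 1 else 0)"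
proof -
  define L where "L j = smult (1 / (\<Prod>i\<in>{1..N}-{j}. x j - x i)) (\<Prod>i\<in>{1..N}-{j}. [:- x i, 1:])" for j
  have pe: "poly (L j) y = (\<Prod>i\<in>{1..N}-{j}. y - x i) / (\<Prod>i\<in>{1..N}-{j}. x j - x i)" for j y
  proof -
    have "poly (\<Prod>i\<in>{1..N}-{j}. [:- x i, 1:]) y = (\<Prod>i\<in>{1..N}-{j}. y - x i)"
      unfolding poly_prod by (intro prod.cong refl) simp
    then show ?thesis unfolding L_def poly_smult by simp
  qed
  have polyL: "poly (L j) (x l) = (if l = j then 1 else 0)" if "j \<in> {1..N}" "l \<in> {1..N}" for j l
  proof (cases "l = j")
    case True
    have "\<forall>i\<in>{1..N}-{j}. x j \<noteq> x i" using inj that unfolding inj_on_def by blast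
    then have "(\<Prod>i\<in>{1..N}-{j}. x j - x i) \<noteq> 0" by simp
    then show ?thesis using True pe by simp
  next
    case False
    have "(\<Prod>i\<in>{1..N}-{j}. x l - x i) = 0"
      using False that by (intro prod_zero) auto
    then show ?thesis using False pe by simp
  qed
  have degL: "degree (L j) \<le> N - 1" if "j \<in> {1..N}" for j
  proof -
    have "degree (L j) \<le> degree (\<Prod>i\<in>{1..N}-{j}. [:- x i, 1:])"
      unfolding L_def by (rule degree_smult_le)
    also have "\<dots> \<le> (\<Sum>i\<in>{1..N}-{j}. degree [:- x i, 1:])"
      using degree_prod_sum_le[of "{1..N}-{j}" "\<lambda>i. [:- x i, 1:]"] by (simp add: o_def)
    also have "\<dots> = N - 1" using that by simp
    finally show ?thesis .
  qed
  have "(\<Sum>j=1..N. coeff (L j) m * x j ^ d) = (if m = d then 1 else 0)" if "d < N" for m d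
  proof -
    define q where "q = (\<Sum>j=1..N. smult (x j ^ d) (L j))"
    have "monom 1 d = q"
    proof (rule poly_eqI_degree[where A = "x ` {1..N}"])
      fix y assume "y \<in> x ` {1..N}"
      then obtain l where l: "l \<in> {1..N}" "y = x l" by auto
      have "poly q y = (\<Sum>j=1..N. x j ^ d * (if l = j then 1 else 0))"
        unfolding q_def poly_sum poly_smult using l by (intro sum.cong refl) (simp add: polyL)
      also have "\<dots> = (\<Sum>j=1..N. if l = j then x j ^ d else 0)" by (intro sum.cong refl) simp
      also have "\<dots> = x l ^ d" using l by (simp add: sum.delta)
      finally show "poly (monom 1 d) y = poly q y" using l by (simp add: poly_monom)
    next
      have c: "card (x ` {1..N}) = N" using inj by (simp add: card_image)
      show "degree (monom (1::real) d) < card (x ` {1..N})" using c that by (simp add: degree_monom_eq)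
      have "degree q \<le> N - 1" unfolding q_def
      proof (rule degree_sum_le)
        fix j assume "j \<in> {1..N}"
        show "degree (smult (x j ^ d) (L j)) \<le> N - 1"
          using degree_smult_le[of "x j ^ d" "L j"] degL[OF \<open>j \<in> {1..N}\<close>] by linarith
      qed simp
      then show "degree q < card (x ` {1..N})" using c that by linarith
    qed
    then have "coeff (monom 1 d) m = coeff q m" by simp
    also have "coeff q m = (\<Sum>j=1..N. coeff (L j) m * x j ^ d)"
      unfolding q_def coeff_sum coeff_smult by (intro sum.cong refl) (rule mult.commute)
    finally have "coeff (monom 1 d) m = (\<Sum>j=1..N. coeff (L j) m * x j ^ d)" .
    then show ?thesis by (auto split: if_splits)
  qed
  then show ?thesis by (intro exI[of _ "\<lambda>m j. coeff (L j) m"]) auto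
qed



lemma coeff_prod_tendsto:
  fixes P :: "'i \<Rightarrow> nat \<Rightarrow> real poly" and Pl :: "'i \<Rightarrow> real poly"
  assumes "finite I" "\<And>i d. i \<in> I \<Longrightarrow> (\<lambda>n. coeff (P i n) d) \<longlonglongrightarrow> coeff (Pl i) d"
  shows "(\<lambda>n. coeff (\<Prod>i\<in>I. P i n) d) \<longlonglongrightarrow> coeff (\<Prod>i\<in>I. Pl i) d"
  using assms
proof (induction I arbitrary: d rule: finite_induct)
  case empty
  then show ?case by simp
next
  case (insert a F)
  show ?case
    unfolding prod.insert[OF insert(1,2)] coeff_mult
    by (intro tendsto_sum tendsto_mult insert) auto
qed

lemma prod_monom: "finite U \<Longrightarrow> (\<Prod>i\<in>U. monom (c i) T) = monom (\<Prod>i\<in>U. c i) (T * card U)"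
  by (induction U rule: finite_induct) (auto simp: mult_monom)

lemma prod_const_poly: "(\<Prod>i\<in>U. [:c i:]) = [:\<Prod>i\<in>U. c i:]"
  by (induction U rule: infinite_finite_induct) (auto simp: mult.commute)

lemma coeff_limit_poly:
  fixes R B :: "nat \<Rightarrow> real"
  assumes "finite I" "T \<ge> 1"
  shows "coeff (\<Prod>i\<in>I. monom (R i) T + [:B i:]) (j * T) =
         (\<Sum>U\<in>{U. U \<subseteq> I \<and> card U = j}. (\<Prod>i\<in>U. R i) * (\<Prod>i\<in>I-U. B i))"
proof -
  have "(\<Prod>i\<in>I. monom (R i) T + [:B i:]) =
        (\<Sum>U\<in>Pow I. monom ((\<Prod>i\<in>U. R i) * (\<Prod>i\<in>I-U. B i)) (T * card U))"
    unfolding prod_add[OF assms(1)]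
  proof (intro sum.cong refl)
    fix U assume "U \<in> Pow I"
    then have "finite U" using assms(1) finite_subset by auto
    then show "(\<Prod>i\<in>U. monom (R i) T) * (\<Prod>i\<in>I - U. [:B i:]) =
       monom ((\<Prod>i\<in>U. R i) * (\<Prod>i\<in>I-U. B i)) (T * card U)"
      unfolding prod_monom[OF \<open>finite U\<close>] prod_const_poly
      by (simp add: monom_altdef mult.commute)
  qed
  then have "coeff (\<Prod>i\<in>I. monom (R i) T + [:B i:]) (j * T) =
     (\<Sum>U\<in>Pow I. if card U = j then (\<Prod>i\<in>U. R i) * (\<Prod>i\<in>I-U. B i) else 0)"
    using assms(2) by (simp add: coeff_sum mult.commute)
  also have "\<dots> = (\<Sum>U\<in>{U \<in> Pow I. card U = j}. (\<Prod>i\<in>U. R i) * (\<Prod>i\<in>I-U. B i))"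
    by (rule sum.inter_filter[symmetric]) (simp add: assms(1))
  also have "{U \<in> Pow I. card U = j} = {U. U \<subseteq> I \<and> card U = j}" by auto
  finally show ?thesis .
qed



lemma count_supersets:
  assumes "finite I" "U \<subseteq> I" "card U \<le> k"
  shows "card {S. S \<subseteq> I \<and> card S = k \<and> U \<subseteq> S} = (card I - card U) choose (k - card U)"
proof -
  have fU: "finite U" using assms finite_subset by blast
  have "bij_betw (\<lambda>S. S - U) {S. S \<subseteq> I \<and> card S = k \<and> U \<subseteq> S} {W. W \<subseteq> I - U \<and> card W = k - card U}"
  proof (rule bij_betw_byWitness[where f' = "\<lambda>W. W \<union> U"])
    show "\<forall>a\<in>{S. S \<subseteq> I \<and> card S = k \<and> U \<subseteq> S}. a - U \<union> U = a" by auto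
    show "\<forall>a'\<in>{W. W \<subseteq> I - U \<and> card W = k - card U}. a' \<union> U - U = a'" by auto
    show "(\<lambda>S. S - U) ` {S. S \<subseteq> I \<and> card S = k \<and> U \<subseteq> S} \<subseteq> {W. W \<subseteq> I - U \<and> card W = k - card U}"
    proof safe
      fix S assume "S \<subseteq> I" "U \<subseteq> S" "k = card S"
      then show "card (S - U) = card S - card U" using fU by (simp add: card_Diff_subset)
    qed auto
    show "(\<lambda>W. W \<union> U) ` {W. W \<subseteq> I - U \<and> card W = k - card U} \<subseteq> {S. S \<subseteq> I \<and> card S = k \<and> U \<subseteq> S}"
    proof safe
      fix W assume "W \<subseteq> I - U" "card W = k - card U"
      moreover have "finite W" using \<open>W \<subseteq> I - U\<close> assms(1) finite_subset by blast
      moreover have "W \<inter> U = {}" using \<open>W \<subseteq> I - U\<close> by auto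
      ultimately show "card (W \<union> U) = k" using fU assms(3) by (simp add: card_Un_disjoint)
    qed (use assms in auto)
  qed
  then have "card {S. S \<subseteq> I \<and> card S = k \<and> U \<subseteq> S} = card {W. W \<subseteq> I - U \<and> card W = k - card U}"
    by (rule bij_betw_same_card)
  also have "\<dots> = card (I - U) choose (k - card U)"
    using assms by (intro n_subsets) auto
  also have "card (I - U) = card I - card U" using assms fU by (simp add: card_Diff_subset)
  finally show ?thesis .
qed

lemma count_supersets0:
  assumes "finite I" "card U > k"
  shows "card {S. S \<subseteq> I \<and> card S = k \<and> U \<subseteq> S} = 0"
proof -
  have "{S. S \<subseteq> I \<and> card S = k \<and> U \<subseteq> S} = {}"
  proof safe
    fix S assume "S \<subseteq> I" "U \<subseteq> S" "k = card S"
    then have "card U \<le> card S" using assms(1) finite_subset card_mono by metis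
    then show "S \<in> {}" using assms \<open>k = card S\<close> by simp
  qed
  then show ?thesis by (metis card.empty)
qed

lemma Dk_identity:
  fixes A R :: "nat \<Rightarrow> real"
  assumes "k \<le> M"
  shows "Dk M \<eta> \<sigma>2 A R k = (\<eta> / (\<sigma>2 + \<eta>)) ^ (M - k) *
     (\<Sum>j=0..k. (-1) ^ j * real ((M - j) choose (k - j)) *
        (\<Sum>U\<in>{U. U \<subseteq> {1..M} \<and> card U = j}. (\<Prod>i\<in>U. R i) * (\<Prod>i\<in>{1..M}-U. A i + R i)))"
proof -
  define a where "a = \<eta> / (\<sigma>2 + \<eta>)"
  define I where "I = {1..M::nat}"
  define B where "B i = A i + R i" for i
  define g where "g U = (\<Prod>i\<in>U. R i) * (\<Prod>i\<in>I-U. B i)" for U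
  define Sk where "Sk = {S. S \<subseteq> I \<and> card S = k}"
  define cnt where "cnt U = card {S. S \<subseteq> I \<and> card S = k \<and> U \<subseteq> S}" for U
  have fI: "finite I" and cI: "card I = M" by (auto simp: I_def)
  have step1: "Dk M \<eta> \<sigma>2 A R k = (\<Sum>S\<in>Sk. a ^ (M - k) * (\<Sum>U\<in>Pow S. (-1) ^ card U * g U))"
    unfolding Dk_def I_def[symmetric] Sk_def[symmetric]
  proof (intro sum.cong refl)
    fix S assume S: "S \<in> Sk"
    then have SI: "S \<subseteq> I" and cS: "card S = k" by (auto simp: Sk_def)
    have fS: "finite S" using SI fI finite_subset by blast
    have "(\<Prod>l\<in>I - S. A l + Zvar \<eta> \<sigma>2 (A l) (R l)) = (\<Prod>l\<in>I - S. a * B l)"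
      by (simp add: Zvar_def a_def B_def)
    also have "\<dots> = a ^ (M - k) * (\<Prod>l\<in>I - S. B l)"
      using SI cS cI fS by (simp add: prod.distrib card_Diff_subset)
    finally have e1: "(\<Prod>l\<in>I - S. A l + Zvar \<eta> \<sigma>2 (A l) (R l)) = a ^ (M - k) * (\<Prod>l\<in>I - S. B l)" .
    have "(\<Prod>i\<in>S. A i) = (\<Prod>i\<in>S. - R i + B i)" by (simp add: B_def)
    also have "\<dots> = (\<Sum>U\<in>Pow S. (\<Prod>i\<in>U. - R i) * (\<Prod>i\<in>S - U. B i))"
      by (rule prod_add[OF fS])
    finally have e2: "(\<Prod>i\<in>S. A i) = (\<Sum>U\<in>Pow S. (-1) ^ card U * (\<Prod>i\<in>U. R i) * (\<Prod>i\<in>S - U. B i))"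
      by (simp add: prod_uminus)
    have e3: "(\<Prod>i\<in>S - U. B i) * (\<Prod>l\<in>I - S. B l) = (\<Prod>i\<in>I - U. B i)" if "U \<subseteq> S" for U
    proof -
      have "(S - U) \<union> (I - S) = I - U" using that SI by auto
      moreover have "(S - U) \<inter> (I - S) = {}" by auto
      ultimately show ?thesis using fI fS
        by (metis finite_Diff prod.union_disjoint)
    qed
    show "(\<Prod>i\<in>S. A i) * (\<Prod>l\<in>I - S. A l + Zvar \<eta> \<sigma>2 (A l) (R l)) =
          a ^ (M - k) * (\<Sum>U\<in>Pow S. (-1) ^ card U * g U)"
      unfolding e1 e2 sum_distrib_left sum_distrib_right
    proof (intro sum.cong refl)
      fix U assume "U \<in> Pow S"
      then have "prod B (I - U) = prod B (S - U) * prod B (I - S)" using e3 by simp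
      then show "(- 1) ^ card U * prod R U * prod B (S - U) * (a ^ (M - k) * prod B (I - S)) =
         a ^ (M - k) * ((- 1) ^ card U * g U)"
        by (simp add: g_def mult_ac)
    qed
  qed
  have step2: "(\<Sum>S\<in>Sk. (\<Sum>U\<in>Pow S. (-1) ^ card U * g U)) = (\<Sum>U\<in>Pow I. (-1) ^ card U * g U * cnt U)"
  proof -
    have "(\<Sum>S\<in>Sk. (\<Sum>U\<in>Pow S. (-1) ^ card U * g U)) =
          (\<Sum>S\<in>Sk. (\<Sum>U\<in>{U. U \<in> Pow I \<and> U \<subseteq> S}. (-1) ^ card U * g U))"
      by (intro sum.cong refl) (auto simp: Sk_def)
    also have "\<dots> = (\<Sum>U\<in>Pow I. (\<Sum>S\<in>{S. S \<in> Sk \<and> U \<subseteq> S}. (-1) ^ card U * g U))"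
      by (rule sum.swap_restrict) (auto simp: Sk_def fI)
    also have "\<dots> = (\<Sum>U\<in>Pow I. (-1) ^ card U * g U * cnt U)"
      by (intro sum.cong refl) (simp add: cnt_def Sk_def conj_assoc)
    finally show ?thesis .
  qed
  have step3: "(\<Sum>U\<in>Pow I. (-1) ^ card U * g U * cnt U) =
     (\<Sum>j=0..k. (-1) ^ j * real ((M - j) choose (k - j)) * (\<Sum>U\<in>{U. U \<subseteq> I \<and> card U = j}. g U))"
  proof -
    have "(\<Sum>U\<in>Pow I. (-1) ^ card U * g U * cnt U) =
          (\<Sum>j\<in>{0..M}. \<Sum>U\<in>{U. U \<in> Pow I \<and> card U = j}. (-1) ^ card U * g U * cnt U)"
      using fI cI by (intro sum.group[symmetric]) (auto intro: card_mono)
    also have "\<dots> = (\<Sum>j\<in>{0..k}. \<Sum>U\<in>{U. U \<in> Pow I \<and> card U = j}. (-1) ^ card U * g U * cnt U)"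
    proof (rule sum.mono_neutral_right)
      show "\<forall>j\<in>{0..M} - {0..k}. (\<Sum>U\<in>{U. U \<in> Pow I \<and> card U = j}. (-1) ^ card U * g U * real (cnt U)) = 0"
        using count_supersets0[OF fI] by (auto simp: cnt_def)
    qed (use assms in auto)
    also have "\<dots> = (\<Sum>j=0..k. (-1) ^ j * real ((M - j) choose (k - j)) * (\<Sum>U\<in>{U. U \<subseteq> I \<and> card U = j}. g U))"
      unfolding sum_distrib_left
      by (intro sum.cong refl) (auto simp: cnt_def count_supersets[OF fI] cI mult_ac)
    finally show ?thesis .
  qed
  show ?thesis
    using step1 step2 step3
    by (simp add: sum_distrib_left[symmetric] a_def g_def I_def B_def)
qed



lemma u_pow:
  assumes "z > 0" "T \<ge> 1"
  shows "(z powr (1 / real T)) ^ m = z powr (real m / real T)"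
proof -
  have "(z powr (1 / real T)) ^ m = (z powr (1 / real T)) powr (real m)"
    using assms by (simp add: powr_realpow)
  also have "\<dots> = z powr (real m / real T)" by (simp add: powr_powr)
  finally show ?thesis .
qed

lemma u_powT:
  assumes "z > 0" "T \<ge> 1"
  shows "(z powr (1 / real T)) ^ T = z"
  using u_pow[OF assms, of T] assms by simp

lemma ratio_tendsto:
  fixes z1 z2 :: "nat \<Rightarrow> real"
  assumes T2: "T \<ge> 2" and t: "1 \<le> t" "t \<le> T - 1"
    and pos1: "\<And>n. z1 n > 0" and pos2: "\<And>n. z2 n > 0"
    and w0: "(\<lambda>n. z2 n powr (real T / (real T - 1)) / z1 n) \<longlonglongrightarrow> 0"
    and u0: "(\<lambda>n. z1 n powr (1 / real T)) \<longlonglongrightarrow> 0"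
  shows "(\<lambda>n. z2 n / (z1 n powr (1 / real T)) ^ t) \<longlonglongrightarrow> 0"
proof -
  define w where "w n = z2 n powr (real T / (real T - 1)) / z1 n" for n
  define u where "u n = z1 n powr (1 / real T)" for n
  define e where "e = (real T - 1) / real T"
  have T1: "T \<ge> 1" using T2 by simp
  have e0: "e > 0" using T2 by (simp add: e_def)
  have eq: "z2 n / u n ^ t = w n powr e * u n ^ (T - 1 - t)" for n
  proof -
    have upos: "u n > 0" using pos1[of n] by (simp add: u_def)
    have "u n ^ (T - 1 - t) * u n ^ t = u n ^ (T - 1)"
      using t by (simp add: power_add[symmetric])
    also have "\<dots> = z1 n powr e"
      unfolding u_def e_def using u_pow[OF pos1[of n] T1, of "T-1"] T1 by (simp add: of_nat_diff)
    finally have a: "u n ^ (T - 1 - t) * u n ^ t = z1 n powr e" .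
    have "w n powr e * z1 n powr e = (w n * z1 n) powr e"
      by (rule powr_mult[symmetric])
    also have "w n * z1 n = z2 n powr (real T / (real T - 1))"
      using pos1[of n] by (simp add: w_def)
    also have "(z2 n powr (real T / (real T - 1))) powr e = z2 n"
      using T2 pos2[of n] by (simp add: powr_powr e_def)
    finally have b: "w n powr e * z1 n powr e = z2 n" .
    have c: "z2 n = (w n powr e * u n ^ (T - 1 - t)) * u n ^ t" using a b by (simp add: mult.assoc)
    have "u n ^ t \<noteq> 0" using upos by simp
    then show ?thesis by (subst c) (rule nonzero_mult_div_cancel_right)
  qed
  have "(\<lambda>n. w n powr e * u n ^ (T - 1 - t)) \<longlonglongrightarrow> 0 * 0 ^ (T - 1 - t)"
  proof (intro tendsto_mult tendsto_power)
    show "(\<lambda>n. w n powr e) \<longlonglongrightarrow> 0"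
      using w0 e0 by (intro tendsto_zero_powrI) (auto simp: w_def[abs_def] intro!: always_eventually divide_nonneg_pos pos1)
    show "u \<longlonglongrightarrow> 0" using u0 by (simp add: u_def[abs_def])
  qed
  then show ?thesis using eq by (simp add: u_def)
qed

lemma poly_sum_bound:
  fixes p :: "real poly"
  assumes "degree p \<le> D"
  shows "poly p y = (\<Sum>d\<le>D. coeff p d * y ^ d)"
  unfolding poly_altdef
  by (rule sum.mono_neutral_left) (use assms in \<open>auto simp: coeff_eq_0\<close>)

theorem proposition1:
  fixes M T N :: nat and \<eta> \<sigma>2 :: real and \<zeta>1 \<zeta>2 :: "nat \<Rightarrow> real" and x :: "nat \<Rightarrow> real"
    and k :: nat
  assumes "M \<ge> 1" and "T \<ge> 1" and "\<eta> > 0" and "\<sigma>2 > 0"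
    and "\<And>n. \<zeta>1 n > 0" and "\<And>n. \<zeta>2 n > 0"
    and "(\<lambda>n. \<zeta>1 n / \<zeta>2 n) \<longlonglongrightarrow> 0" and "\<zeta>2 \<longlonglongrightarrow> 0"
    and "T \<ge> 2 \<Longrightarrow> (\<lambda>n. \<zeta>2 n powr (real T / (real T - 1)) / \<zeta>1 n) \<longlonglongrightarrow> 0"
    and "N = (M - 1) * T + 1"
    and "inj_on x {1..N}"
    and "k < M"
  shows "\<exists>f :: nat \<Rightarrow> real list \<Rightarrow> real.
           \<forall>(A :: nat \<Rightarrow> real) (R :: nat \<Rightarrow> real) (S :: nat \<Rightarrow> nat \<Rightarrow> real).
             (\<lambda>n. f n (map (\<lambda>j. node_output M T (\<zeta>1 n) (\<zeta>2 n) A R S (x j)) [1..<N+1]))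
               \<longlonglongrightarrow> Dk M \<eta> \<sigma>2 A R k"
proof -
  note M1 = assms(1) and T1 = assms(2) and pos1 = assms(5) and pos2 = assms(6)
  note Ndef = assms(10) and kM = assms(12)
  obtain lam where lam: "\<forall>m d. d < N \<longrightarrow> (\<Sum>j=1..N. lam m j * x j ^ d) = (if m = d then 1 else 0)"
    using lagrange_exists[OF assms(11)] by blast
  define \<alpha> where "\<alpha> = \<eta> / (\<sigma>2 + \<eta>)"
  define u where "u n = \<zeta>1 n powr (1 / real T)" for n
  define c where "c m d = (\<Sum>l=1..N. lam m l * x l ^ d)" for m d
  define f where "f n v = \<alpha> ^ (M - k) * (\<Sum>j=0..k. (-1) ^ j * real ((M - j) choose (k - j)) *
      ((\<Sum>l=1..N. lam (j * T) l * v ! (l - 1)) / \<zeta>1 n ^ j))" for n v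
  have upos: "u n > 0" for n using pos1[of n] by (simp add: u_def)
  have uT: "u n ^ (j * T) = \<zeta>1 n ^ j" for n j
    using u_powT[OF pos1[of n] T1] by (simp add: u_def power_mult mult.commute)
  have z10: "\<zeta>1 \<longlonglongrightarrow> 0"
  proof -
    have "(\<lambda>n. (\<zeta>1 n / \<zeta>2 n) * \<zeta>2 n) \<longlonglongrightarrow> 0 * 0"
      by (intro tendsto_mult assms(7) assms(8))
    moreover have "(\<lambda>n. (\<zeta>1 n / \<zeta>2 n) * \<zeta>2 n) = \<zeta>1"
      using pos2 by (auto simp: fun_eq_iff less_imp_neq[symmetric])
    ultimately show ?thesis by simp
  qed
  have u0: "u \<longlonglongrightarrow> 0"
    unfolding u_def[abs_def] using z10 T1 pos1
    by (intro tendsto_zero_powrI) (auto intro!: always_eventually less_imp_le)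
  have cdelta: "c m d = (if m = d then 1 else 0)" if "d < N" for m d
    using lam that by (simp add: c_def)
  show ?thesis
  proof (intro exI[of _ f] allI)
    fix A R :: "nat \<Rightarrow> real" and S :: "nat \<Rightarrow> nat \<Rightarrow> real"
    define B where "B i = A i + R i" for i
    define qe where "qe n i = [:B i:] + (\<Sum>t=1..T-1. monom (\<zeta>2 n * S i t / u n ^ t) t) + monom (R i) T" for n i
    define ql where "ql i = monom (R i) T + [:B i:]" for i
    define Q where "Q n = (\<Prod>i=1..M. qe n i)" for n
    define Ql where "Ql = (\<Prod>i=1..M. ql i)"
    define V where "V n = map (\<lambda>j. node_output M T (\<zeta>1 n) (\<zeta>2 n) A R S (x j)) [1..<N+1]" for n
    define D where "D = M * T"
    have enc: "enc_poly T (\<zeta>1 n) (\<zeta>2 n) (A i) (R i) (S i) y = poly (qe n i) (u n * y)" for n i y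
    proof -
      have s: "(\<Sum>t=1..T-1. \<zeta>2 n * S i t / u n ^ t * (u n * y) ^ t) = \<zeta>2 n * (\<Sum>t=1..T-1. S i t * y ^ t)"
      proof -
        have "\<zeta>2 n * S i t / u n ^ t * (u n * y) ^ t = \<zeta>2 n * (S i t * y ^ t)" for t
          using upos[of n] by (simp add: power_mult_distrib)
        then show ?thesis unfolding sum_distrib_left by (intro sum.cong refl)
      qed
      have r: "R i * (u n * y) ^ T = \<zeta>1 n * R i * y ^ T"
        using uT[of n 1] by (simp add: power_mult_distrib)
      have "poly (qe n i) (u n * y) = B i + \<zeta>2 n * (\<Sum>t=1..T-1. S i t * y ^ t) + \<zeta>1 n * R i * y ^ T"
      proof -
        have "poly (qe n i) (u n * y) = B i + (\<Sum>t=1..T-1. \<zeta>2 n * S i t / u n ^ t * (u n * y) ^ t) + R i * (u n * y) ^ T"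
          unfolding qe_def poly_add poly_sum poly_monom by simp
        then show ?thesis unfolding s r .
      qed
      then show ?thesis
      proof (cases "T \<ge> 2")
        case False
        then have "T = 1" using T1 by simp
        then show ?thesis using \<open>poly (qe n i) (u n * y) = _\<close> by (simp add: enc_poly_def B_def)
      qed (simp add: enc_poly_def B_def)
    qed
    have evalV: "V n ! (l - 1) = poly (Q n) (u n * x l)" if "l \<in> {1..N}" for n l
    proof -
      have "V n ! (l - 1) = node_output M T (\<zeta>1 n) (\<zeta>2 n) A R S (x l)"
      proof -
        have lt: "l - 1 < length [1..<N+1]" using that by auto
        have "[1..<N+1] ! (l - 1) = l" using that by (subst nth_upt) auto
        then show ?thesis unfolding V_def nth_map[OF lt] by simp
      qed
      also have "\<dots> = poly (Q n) (u n * x l)"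
        by (simp add: node_output_def Q_def poly_prod enc)
      finally show ?thesis .
    qed
    have degQ: "degree (Q n) \<le> D" for n
    proof -
      have dq: "degree (qe n i) \<le> T" for i
        unfolding qe_def
        by (intro degree_add_le degree_sum_le order.trans[OF degree_monom_le]) auto
      have "degree (Q n) \<le> (\<Sum>i=1..M. degree (qe n i))"
        unfolding Q_def using degree_prod_sum_le[of "{1..M}" "qe n"] by (simp add: o_def)
      also have "\<dots> \<le> (\<Sum>i=1..M. T)" by (intro sum_mono dq)
      finally show ?thesis by (simp add: D_def)
    qed
    have qe_conv: "(\<lambda>n. coeff (qe n i) d) \<longlonglongrightarrow> coeff (ql i) d" for i d
    proof -
      have "(\<lambda>n. coeff [:B i:] d + (\<Sum>t=1..T-1. if t = d then \<zeta>2 n * S i t / u n ^ t else 0) + coeff (monom (R i) T) d)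
            \<longlonglongrightarrow> coeff [:B i:] d + (\<Sum>t=1..T-1. 0) + coeff (monom (R i) T) d"
      proof (intro tendsto_add tendsto_const tendsto_sum)
        fix t assume t: "t \<in> {1..T-1}"
        then have T2: "T \<ge> 2" by auto
        have "(\<lambda>n. S i t * (\<zeta>2 n / (\<zeta>1 n powr (1 / real T)) ^ t)) \<longlonglongrightarrow> S i t * 0"
          by (intro tendsto_mult tendsto_const ratio_tendsto[OF T2 _ _ pos1 pos2 assms(9)[OF T2]])
             (use t u0 in \<open>auto simp: u_def[abs_def]\<close>)
        then show "(\<lambda>n. if t = d then \<zeta>2 n * S i t / u n ^ t else 0) \<longlonglongrightarrow> 0"
          by (cases "t = d") (simp_all add: u_def mult.commute)
      qed
      then show ?thesis by (simp add: qe_def ql_def coeff_sum add.commute)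
    qed
    have Q_conv: "(\<lambda>n. coeff (Q n) d) \<longlonglongrightarrow> coeff Ql d" for d
      unfolding Q_def Ql_def by (rule coeff_prod_tendsto) (auto intro: qe_conv)
    have Lsum: "(\<Sum>l=1..N. lam m l * V n ! (l - 1)) = (\<Sum>d\<le>D. coeff (Q n) d * u n ^ d * c m d)" for m n
    proof -
      have "(\<Sum>l=1..N. lam m l * V n ! (l - 1)) = (\<Sum>l=1..N. lam m l * (\<Sum>d\<le>D. coeff (Q n) d * (u n * x l) ^ d))"
      proof (intro sum.cong refl)
        fix l assume "l \<in> {1..N}"
        then show "lam m l * V n ! (l - 1) = lam m l * (\<Sum>d\<le>D. coeff (Q n) d * (u n * x l) ^ d)"
          using evalV[of l n] poly_sum_bound[OF degQ[of n]] by simp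
      qed
      also have "\<dots> = (\<Sum>d\<le>D. coeff (Q n) d * u n ^ d * c m d)"
        unfolding c_def sum_distrib_left
        by (subst sum.swap) (simp add: power_mult_distrib mult_ac)
      finally show ?thesis .
    qed
    have ehat: "(\<lambda>n. (\<Sum>l=1..N. lam (j * T) l * V n ! (l - 1)) / \<zeta>1 n ^ j) \<longlonglongrightarrow> coeff Ql (j * T)"
      if j: "j \<le> k" for j
    proof -
      have "j \<le> M - 1" using j kM by simp
      then have "j * T \<le> (M - 1) * T" by (rule mult_le_mono1)
      then have jN: "j * T < N" using Ndef by linarith
      have jD: "j * T \<le> D" using j kM by (simp add: D_def)
      define lim where "lim d = (if d = j * T then coeff Ql d else 0)" for d
      have eq: "(\<Sum>l=1..N. lam (j * T) l * V n ! (l - 1)) / \<zeta>1 n ^ j =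
        (\<Sum>d\<le>D. if d < N then (if d = j * T then coeff (Q n) d else 0)
                  else coeff (Q n) d * u n ^ (d - j * T) * c (j * T) d)" for n
        unfolding Lsum sum_divide_distrib
      proof (intro sum.cong refl)
        fix d assume "d \<in> {..D}"
        show "coeff (Q n) d * u n ^ d * c (j * T) d / \<zeta>1 n ^ j =
          (if d < N then (if d = j * T then coeff (Q n) d else 0)
                  else coeff (Q n) d * u n ^ (d - j * T) * c (j * T) d)"
        proof (cases "d < N")
          case True
          then show ?thesis using cdelta[OF True, of "j*T"] uT[of n j] pos1[of n] by auto
        next
          case False
          then have "u n ^ d = u n ^ (d - j * T) * \<zeta>1 n ^ j"
          proof -
            have "d = (d - j * T) + j * T" using jN False by simp
            then have "u n ^ d = u n ^ (d - j * T) * u n ^ (j * T)" by (metis power_add)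
            then show ?thesis using uT[of n j] by simp
          qed
          then show ?thesis using False pos1[of n] by simp
        qed
      qed
      have "(\<lambda>n. (\<Sum>d\<le>D. if d < N then (if d = j * T then coeff (Q n) d else 0)
                  else coeff (Q n) d * u n ^ (d - j * T) * c (j * T) d)) \<longlonglongrightarrow> (\<Sum>d\<le>D. lim d)"
      proof (intro tendsto_sum)
        fix d assume "d \<in> {..D}"
        show "(\<lambda>n. if d < N then (if d = j * T then coeff (Q n) d else 0)
                  else coeff (Q n) d * u n ^ (d - j * T) * c (j * T) d) \<longlonglongrightarrow> lim d"
        proof (cases "d < N")
          case True
          then show ?thesis by (auto simp: lim_def Q_conv)
        next
          case False
          then have "d - j * T > 0" using jN by simp
          have "(\<lambda>n. coeff (Q n) d * u n ^ (d - j * T) * c (j * T) d) \<longlonglongrightarrow> coeff Ql d * 0 ^ (d - j * T) * c (j * T) d"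
            by (intro tendsto_mult tendsto_power tendsto_const Q_conv u0)
          moreover have "(0::real) ^ (d - j * T) = 0" using \<open>d - j * T > 0\<close> by simp
          ultimately show ?thesis using False by (simp add: lim_def)
        qed
      qed
      also have "(\<Sum>d\<le>D. lim d) = coeff Ql (j * T)"
        using jD by (simp add: lim_def sum.delta)
      finally show ?thesis unfolding eq .
    qed
    have "(\<lambda>n. f n (V n)) \<longlonglongrightarrow> \<alpha> ^ (M - k) * (\<Sum>j=0..k. (-1) ^ j * real ((M - j) choose (k - j)) * coeff Ql (j * T))"
      unfolding f_def by (intro tendsto_mult tendsto_const tendsto_sum ehat) auto
    also have "\<alpha> ^ (M - k) * (\<Sum>j=0..k. (-1) ^ j * real ((M - j) choose (k - j)) * coeff Ql (j * T)) = Dk M \<eta> \<sigma>2 A R k"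
      unfolding Dk_identity[OF less_imp_le[OF kM]] Ql_def ql_def coeff_limit_poly[OF finite_atLeastAtMost T1]
      by (simp add: \<alpha>_def B_def)
    finally show "(\<lambda>n. f n (map (\<lambda>j. node_output M T (\<zeta>1 n) (\<zeta>2 n) A R S (x j)) [1..<N+1])) \<longlonglongrightarrow> Dk M \<eta> \<sigma>2 A R k"
      by (simp add: V_def)
  qed
qed

end
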